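(* Let $V$ be a vertex operator algebra and let $h\in V$ satisfy $L(n)h=\delta_{n,0}h$ and $h_nh=\delta_{n,1}\gamma\mathbf 1$ for all integers $n\ge0$, with $\gamma\in\mathbb Q$. Then, as operators on $V$ (formal power series in $z$), $$e^{z(L(1)-h(1))}e^{-zL(1)}=\exp\Big(\sum_{k=1}^{\infty}\frac{h(k)}{k}(-z)^{k}\Big),\qquad e^{z(L(-1)+h(-1))}e^{-zL(-1)}=\exp\Big(\sum_{k=1}^{\infty}\frac{h(-k)}{k}z^{k}\Big).$$
   Context: $Y(h,z)=\sum_{n\in\mathbb Z}h(n)z^{-n-1}$ and $Y(\omega,z)=\sum_{n\in\mathbb Z}L(n)z^{-n-2}$, where $\omega$ is the Virasoro element of $V$. *)

theory Defs
  imports Complex_Main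
begin

text \<open>The vertex operator is encoded by its modes: Y a n b = a_n b, i.e. Y(a,z) = sum_n a_n z^(-n-1).\<close>

type_synonym 'v vfield = "'v \<Rightarrow> int \<Rightarrow> 'v \<Rightarrow> 'v"

text \<open>Sum of a finitely supported family (finiteness is guaranteed by truncation).\<close>
definition fsum :: "(nat \<Rightarrow> 'v::comm_monoid_add) \<Rightarrow> 'v" where
  "fsum f = sum f {j. f j \<noteq> 0}"

text \<open>Virasoro operators: Y(omega,z) = sum_n L(n) z^(-n-2), so L(n) = omega_(n+1).\<close>
definition Vir :: "'v vfield \<Rightarrow> 'v \<Rightarrow> int \<Rightarrow> 'v \<Rightarrow> 'v" where
  "Vir Y \<omega> n = Y \<omega> (n + 1)"

definition weight_space :: "(complex \<Rightarrow> 'v \<Rightarrow> 'v) \<Rightarrow> 'v vfield \<Rightarrow> 'v \<Rightarrow> int \<Rightarrow> 'v set" where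
  "weight_space scale Y \<omega> n = {v. Vir Y \<omega> 0 v = scale (of_int n) v}"

definition is_VOA :: "(complex \<Rightarrow> 'v::ab_group_add \<Rightarrow> 'v) \<Rightarrow> 'v vfield \<Rightarrow> 'v \<Rightarrow> 'v \<Rightarrow> bool" where
  "is_VOA scale Y vac \<omega> \<longleftrightarrow>
     vector_space scale \<and>
     (\<forall>a n. Vector_Spaces.linear scale scale (Y a n)) \<and>
     (\<forall>n b. Vector_Spaces.linear scale scale (\<lambda>a. Y a n b)) \<and>
     \<comment> \<open>truncation\<close>
     (\<forall>a b. \<exists>N. \<forall>n\<ge>N. Y a n b = 0) \<and>
     \<comment> \<open>vacuum property Y(1,z) = id\<close>
     (\<forall>n v. Y vac n v = (if n = -1 then v else 0)) \<and>
     \<comment> \<open>creation property\<close>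
     (\<forall>a. (\<forall>n\<ge>0. Y a n vac = 0) \<and> Y a (-1) vac = a) \<and>
     \<comment> \<open>Jacobi identity, in Borcherds' component form\<close>
     (\<forall>a b c m n k.
        fsum (\<lambda>j. scale (of_int m gchoose j) (Y (Y a (n + int j) b) (m + k - int j) c)) =
        fsum (\<lambda>j. scale ((-1) ^ j * (of_int n gchoose j))
                 (Y a (m + n - int j) (Y b (k + int j) c)
                  - scale ((-1) powi n) (Y b (n + k - int j) (Y a (m + int j) c))))) \<and>
     \<comment> \<open>Virasoro relations with some central charge\<close>
     (\<exists>cc. \<forall>m n v. Vir Y \<omega> m (Vir Y \<omega> n v) - Vir Y \<omega> n (Vir Y \<omega> m v) =
          scale (of_int (m - n)) (Vir Y \<omega> (m + n) v)
          + (if m + n = 0 then scale ((of_int m ^ 3 - of_int m) / 12 * cc) v else 0)) \<and>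
     \<comment> \<open>L(-1)-derivative property Y(L(-1)a,z) = d/dz Y(a,z)\<close>
     (\<forall>a n v. Y (Vir Y \<omega> (-1) a) n v = scale (- of_int n) (Y a (n - 1) v)) \<and>
     \<comment> \<open>grading: V is the (direct) sum of the L(0)-eigenspaces V_(n), n in Z\<close>
     (UNIV \<subseteq> module.span scale (\<Union>n. weight_space scale Y \<omega> n)) \<and>
     (\<forall>n. \<exists>B. finite B \<and> weight_space scale Y \<omega> n \<subseteq> module.span scale B) \<and>
     (\<exists>N. \<forall>n<N. weight_space scale Y \<omega> n = {0})"

text \<open>Formal power series in z (nonnegative powers) with coefficients operators on V.\<close>
definition ser_mult :: "(nat \<Rightarrow> 'v \<Rightarrow> 'v::comm_monoid_add) \<Rightarrow> (nat \<Rightarrow> 'v \<Rightarrow> 'v) \<Rightarrow> nat \<Rightarrow> 'v \<Rightarrow> 'v" where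
  "ser_mult A B n v = (\<Sum>i\<le>n. A i (B (n - i) v))"

definition ser_one :: "nat \<Rightarrow> 'v \<Rightarrow> 'v::zero" where
  "ser_one n v = (if n = 0 then v else 0)"

definition ser_pow :: "(nat \<Rightarrow> 'v \<Rightarrow> 'v::comm_monoid_add) \<Rightarrow> nat \<Rightarrow> nat \<Rightarrow> 'v \<Rightarrow> 'v" where
  "ser_pow A m = (ser_mult A ^^ m) ser_one"

text \<open>exp(S) = sum_m S^m/m! for a series S with zero constant term.\<close>
definition ser_exp :: "(complex \<Rightarrow> 'v \<Rightarrow> 'v) \<Rightarrow> (nat \<Rightarrow> 'v \<Rightarrow> 'v::comm_monoid_add) \<Rightarrow> nat \<Rightarrow> 'v \<Rightarrow> 'v" where
  "ser_exp scale S n v = (\<Sum>m\<le>n. scale (1 / fact m) (ser_pow S m n v))"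

definition exp_op :: "(complex \<Rightarrow> 'v \<Rightarrow> 'v) \<Rightarrow> ('v \<Rightarrow> 'v) \<Rightarrow> nat \<Rightarrow> 'v \<Rightarrow> 'v" where
  "exp_op scale X n v = scale (1 / fact n) ((X ^^ n) v)"

end

theory Submission
  imports Defs
begin

locale cvs =
  fixes sc :: "complex \<Rightarrow> 'b::ab_group_add \<Rightarrow> 'b"
  assumes vs: "vector_space sc"
begin

sublocale vector_space sc by (rule vs)

definition lin :: "('b \<Rightarrow> 'b) \<Rightarrow> bool" where
  "lin f \<longleftrightarrow> (\<forall>x y. f (x + y) = f x + f y) \<and> (\<forall>c x. f (sc c x) = sc c (f x))"

lemma lin_add: "lin f \<Longrightarrow> f (x + y) = f x + f y" by (simp add: lin_def)
lemma lin_scale: "lin f \<Longrightarrow> f (sc c x) = sc c (f x)" by (simp add: lin_def)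
lemma lin_zero: "lin f \<Longrightarrow> f 0 = 0"
  by (metis lin_scale scale_zero_left)
lemma lin_neg: "lin f \<Longrightarrow> f (- x) = - f x"
  by (metis lin_scale scale_minus_left scale_one)
lemma lin_diff: "lin f \<Longrightarrow> f (x - y) = f x - f y"
  by (metis diff_conv_add_uminus lin_add lin_neg)
lemma lin_sum: "lin f \<Longrightarrow> f (\<Sum>i\<in>A. g i) = (\<Sum>i\<in>A. f (g i))"
  by (induction A rule: infinite_finite_induct) (auto simp: lin_zero lin_add)

lemma lin_id: "lin (\<lambda>v. v)" by (simp add: lin_def)
lemma lin_comp: "lin f \<Longrightarrow> lin g \<Longrightarrow> lin (\<lambda>v. f (g v))" by (simp add: lin_def)
lemma lin_plus: "lin f \<Longrightarrow> lin g \<Longrightarrow> lin (\<lambda>v. f v + g v)"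
  by (simp add: lin_def scale_right_distrib)
lemma lin_uminus: "lin f \<Longrightarrow> lin (\<lambda>v. - f v)"
  by (simp add: lin_def)
lemma lin_sc: "lin f \<Longrightarrow> lin (\<lambda>v. sc c (f v))"
  by (simp add: lin_def scale_right_distrib scale_left_commute)
lemma lin_0: "lin (\<lambda>v. 0)" by (simp add: lin_def)
lemma lin_sumf: "(\<And>i. lin (f i)) \<Longrightarrow> lin (\<lambda>v. \<Sum>i\<in>A. f i v)"
  unfolding lin_def by (simp add: sum.distrib scale_sum_right)
lemma lin_pow: "lin f \<Longrightarrow> lin (f ^^ n)"
proof (induction n)
  case 0 then show ?case by (simp add: lin_def)
next
  case (Suc n)
  have "lin (\<lambda>v. f ((f ^^ n) v))" by (rule lin_comp[OF Suc.prems Suc.IH[OF Suc.prems]])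
  then show ?case by (simp add: o_def)
qed

lemma lin_ser_mult: "(\<And>i. lin (X i)) \<Longrightarrow> (\<And>i. lin (Y i)) \<Longrightarrow> lin (ser_mult X Y n)"
  unfolding ser_mult_def[abs_def] by (rule lin_sumf, rule lin_comp) auto

lemma lin_ser_one: "lin (ser_one n)"
  unfolding ser_one_def[abs_def] by (cases "n = 0") (simp_all add: lin_id lin_0)

lemma lin_ser_pow: "(\<And>i. lin (S i)) \<Longrightarrow> lin (ser_pow S m n)"
proof (induction m arbitrary: n)
  case 0 then show ?case by (simp add: ser_pow_def lin_ser_one)
next
  case (Suc m) then show ?case by (simp add: ser_pow_def lin_ser_mult)
qed

lemma ser_pow_Suc: "ser_pow S (Suc m) = ser_mult S (ser_pow S m)"
  by (simp add: ser_pow_def)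

lemma ser_pow_vanish: "(\<And>i. lin (S i)) \<Longrightarrow> (\<And>v. S 0 v = 0) \<Longrightarrow> n < m \<Longrightarrow> ser_pow S m n v = 0"
proof (induction m arbitrary: n v)
  case 0 then show ?case by simp
next
  case (Suc m)
  have "ser_pow S (Suc m) n v = (\<Sum>i\<le>n. S i (ser_pow S m (n - i) v))"
    by (simp add: ser_pow_Suc ser_mult_def)
  also have "\<dots> = 0"
  proof (rule sum.neutral, intro ballI)
    fix i assume "i \<in> {..n}"
    show "S i (ser_pow S m (n - i) v) = 0"
    proof (cases "i = 0")
      case True then show ?thesis using Suc.prems by simp
    next
      case False
      then have "n - i < m" using Suc.prems(3) \<open>i \<in> {..n}\<close> by auto
      then show ?thesis using Suc.IH[of "n - i"] Suc.prems by (simp add: lin_zero)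
    qed
  qed
  finally show ?case .
qed


definition dlt :: "('b \<Rightarrow> 'b) \<Rightarrow> (nat \<Rightarrow> 'b \<Rightarrow> 'b) \<Rightarrow> nat \<Rightarrow> 'b \<Rightarrow> 'b" where
  "dlt B X n v = sc (of_nat (Suc n)) (X (Suc n) v) - B (X n v) + X n (B v)"

lemma leibniz:
  assumes B: "lin B" and X: "\<And>i. lin (X i)"
  shows "dlt B (ser_mult X Y) n v = ser_mult (dlt B X) Y n v + ser_mult X (dlt B Y) n v"
proof -
  have e1: "ser_mult (dlt B X) Y n v = (\<Sum>i\<le>n. sc (of_nat (Suc i)) (X (Suc i) (Y (n-i) v)))
      - (\<Sum>i\<le>n. B (X i (Y (n-i) v))) + (\<Sum>i\<le>n. X i (B (Y (n-i) v)))"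
    by (simp add: ser_mult_def dlt_def sum.distrib sum_subtractf)
  have e2: "ser_mult X (dlt B Y) n v = (\<Sum>i\<le>n. sc (of_nat (Suc (n-i))) (X i (Y (Suc (n-i)) v)))
      - (\<Sum>i\<le>n. X i (B (Y (n-i) v))) + (\<Sum>i\<le>n. X i (Y (n-i) (B v)))"
    by (simp add: ser_mult_def dlt_def sum.distrib sum_subtractf lin_add[OF X] lin_diff[OF X] lin_scale[OF X])
  have e3: "dlt B (ser_mult X Y) n v = sc (of_nat (Suc n)) (\<Sum>i\<le>Suc n. X i (Y (Suc n - i) v))
      - (\<Sum>i\<le>n. B (X i (Y (n-i) v))) + (\<Sum>i\<le>n. X i (Y (n-i) (B v)))"
    by (simp add: ser_mult_def dlt_def lin_sum[OF B])
  have k1: "(\<Sum>i\<le>n. sc (of_nat (Suc i)) (X (Suc i) (Y (n-i) v)))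
      = (\<Sum>i\<le>Suc n. sc (of_nat i) (X i (Y (Suc n - i) v)))"
    by (simp only: sum.atMost_Suc_shift) simp
  have k2: "(\<Sum>i\<le>n. sc (of_nat (Suc (n-i))) (X i (Y (Suc (n-i)) v)))
      = (\<Sum>i\<le>Suc n. sc (of_nat (Suc n - i)) (X i (Y (Suc n - i) v)))"
    by (simp add: sum.atMost_Suc Suc_diff_le add_diff_eq)
  have k3: "sc (of_nat (Suc n)) (\<Sum>i\<le>Suc n. X i (Y (Suc n - i) v))
      = (\<Sum>i\<le>Suc n. sc (of_nat i) (X i (Y (Suc n - i) v)) + sc (of_nat (Suc n - i)) (X i (Y (Suc n - i) v)))"
    unfolding scale_sum_right
  proof (rule sum.cong)
    fix i assume "i \<in> {..Suc n}"
    then have "(of_nat (Suc n) :: complex) = of_nat i + of_nat (Suc n - i)"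
      by (simp add: of_nat_add[symmetric] del: of_nat_add)
    then show "sc (of_nat (Suc n)) (X i (Y (Suc n - i) v)) =
        sc (of_nat i) (X i (Y (Suc n - i) v)) + sc (of_nat (Suc n - i)) (X i (Y (Suc n - i) v))"
      by (simp add: scale_left_distrib)
  qed simp
  show ?thesis
    unfolding e1 e2 e3 k3 sum.distrib k1[symmetric] k2[symmetric] by (simp add: algebra_simps)
qed

lemma dlt_pow:
  assumes B: "lin B" and K: "lin K" and S: "\<And>i. lin (S i)" and S0: "\<And>v. S 0 v = 0"
    and dS: "\<And>n v. dlt B S n v = (if n = 0 then K v else 0)"
    and comm: "\<And>i v. K (S i v) = S i (K v)"
  shows "dlt B (ser_pow S m) n v = sc (of_nat m) (K (ser_pow S (m - 1) n v))"
proof (induction m arbitrary: n v)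
  case 0 then show ?case by (simp add: ser_pow_def dlt_def ser_one_def lin_zero[OF B])
next
  case (Suc m)
  have e: "dlt B (ser_pow S (Suc m)) n v = ser_mult (dlt B S) (ser_pow S m) n v
      + ser_mult S (dlt B (ser_pow S m)) n v"
    by (simp add: ser_pow_Suc leibniz[OF B S])
  have a: "ser_mult (dlt B S) (ser_pow S m) n v = K (ser_pow S m n v)"
    by (simp add: ser_mult_def dS)
  have b: "ser_mult S (dlt B (ser_pow S m)) n v = sc (of_nat m) (K (ser_pow S m n v))"
  proof (cases m)
    case 0
    have "dlt B (ser_pow S m) j w = 0" for j w using Suc.IH 0 by simp
    then show ?thesis using 0 by (simp add: ser_mult_def lin_zero[OF S])
  next
    case (Suc m')
    have ih: "dlt B (ser_pow S m) j w = sc (of_nat m) (K (ser_pow S m' j w))" for j w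
      using Suc.IH Suc by simp
    have "ser_mult S (dlt B (ser_pow S m)) n v
        = (\<Sum>i\<le>n. sc (of_nat m) (K (S i (ser_pow S m' (n - i) v))))"
      by (simp add: ser_mult_def ih lin_scale[OF S] comm)
    also have "\<dots> = sc (of_nat m) (K (ser_pow S m n v))"
      by (simp add: Suc ser_pow_Suc ser_mult_def scale_sum_right lin_sum[OF K])
    finally show ?thesis .
  qed
  show ?case unfolding e a b by (simp add: scale_left_distrib)
qed

lemma ser_exp_ext:
  assumes S: "\<And>i. lin (S i)" and S0: "\<And>v. S 0 v = 0" and le: "n \<le> N"
  shows "ser_exp sc S n v = (\<Sum>m\<le>N. sc (1 / fact m) (ser_pow S m n v))"
  unfolding ser_exp_def
proof (rule sum.mono_neutral_left)
  show "\<forall>i\<in>{..N} - {..n}. sc (1 / fact i) (ser_pow S i n v) = 0"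
    using ser_pow_vanish[where S=S, OF S S0] by auto
qed (use le in auto)

lemma dlt_exp:
  assumes B: "lin B" and K: "lin K" and S: "\<And>i. lin (S i)" and S0: "\<And>v. S 0 v = 0"
    and dS: "\<And>n v. dlt B S n v = (if n = 0 then K v else 0)"
    and comm: "\<And>i v. K (S i v) = S i (K v)"
  shows "dlt B (ser_exp sc S) n v = K (ser_exp sc S n v)"
proof -
  have x1: "ser_exp sc S (Suc n) w = (\<Sum>m\<le>Suc n. sc (1 / fact m) (ser_pow S m (Suc n) w))" for w
    by (rule ser_exp_ext[where S=S, OF S S0]) simp
  have x2: "ser_exp sc S n w = (\<Sum>m\<le>Suc n. sc (1 / fact m) (ser_pow S m n w))" for w
    by (rule ser_exp_ext[where S=S, OF S S0]) simp
  have "dlt B (ser_exp sc S) n v = (\<Sum>m\<le>Suc n. sc (1 / fact m) (dlt B (ser_pow S m) n v))"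
    unfolding dlt_def x1 x2
    by (simp add: lin_sum[OF B] lin_scale[OF B] scale_sum_right sum_subtractf sum.distrib
        scale_right_diff_distrib scale_right_distrib del: sum.atMost_Suc)
  also have "\<dots> = (\<Sum>m\<le>Suc n. sc (1 / fact m) (sc (of_nat m) (K (ser_pow S (m - 1) n v))))"
    by (simp add: dlt_pow[OF B K S S0 dS comm])
  also have "\<dots> = (\<Sum>m\<le>n. sc (1 / fact m) (K (ser_pow S m n v)))"
  proof -
    have c: "sc (1 / fact (Suc m)) (sc (of_nat (Suc m)) x) = sc (1 / fact m) x" for m x
    proof -
      have "1 / fact (Suc m) * of_nat (Suc m) = (1 / fact m :: complex)"
        by (simp add: fact_Suc del: of_nat_Suc)
      then show ?thesis by (simp only: scale_scale)
    qed
    show ?thesis by (simp only: sum.atMost_Suc_shift diff_Suc_1 c) simp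
  qed
  also have "\<dots> = K (ser_exp sc S n v)"
    by (simp add: ser_exp_def lin_sum[OF K] lin_scale[OF K])
  finally show ?thesis .
qed

lemma lin_exp_op: "lin A \<Longrightarrow> lin (exp_op sc A n)"
  unfolding exp_op_def[abs_def] by (rule lin_sc, rule lin_pow)

lemma fact_coef: "sc (of_nat (Suc n)) (sc (1 / fact (Suc n)) x) = sc (1 / fact n) x"
proof -
  have "of_nat (Suc n) * (1 / fact (Suc n)) = (1 / fact n :: complex)"
    by (simp add: fact_Suc del: of_nat_Suc)
  then show ?thesis by (simp only: scale_scale)
qed

lemma dlt0_expA: "lin A \<Longrightarrow> dlt (\<lambda>v. 0) (exp_op sc A) n v = A (exp_op sc A n v)"
  by (simp add: dlt_def exp_op_def fact_coef lin_scale lin_zero[OF lin_pow] del: of_nat_Suc)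

lemma dlt0_expC: "lin C \<Longrightarrow> dlt (\<lambda>v. 0) (exp_op sc C) n v = exp_op sc C n (C v)"
  by (simp add: dlt_def exp_op_def fact_coef lin_zero[OF lin_pow] funpow_Suc_right del: of_nat_Suc funpow.simps)

lemma G_rec:
  assumes A: "lin A" and B: "lin B"
  shows "sc (of_nat (Suc n)) (ser_mult (exp_op sc A) (exp_op sc (\<lambda>v. - B v)) (Suc n) v)
    = A (ser_mult (exp_op sc A) (exp_op sc (\<lambda>v. - B v)) n v)
      - ser_mult (exp_op sc A) (exp_op sc (\<lambda>v. - B v)) n (B v)"
proof -
  let ?C = "\<lambda>v. - B v"
  let ?G = "ser_mult (exp_op sc A) (exp_op sc ?C)"
  have C: "lin ?C" by (rule lin_uminus[OF B])
  have LA: "\<And>i. lin (exp_op sc A i)" by (rule lin_exp_op[OF A])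
  have LC: "\<And>i. lin (exp_op sc ?C i)" by (rule lin_exp_op[OF C])
  have LG: "lin (?G n)" by (rule lin_ser_mult[OF LA LC])
  have "dlt (\<lambda>v. 0) ?G n v = ser_mult (dlt (\<lambda>v. 0) (exp_op sc A)) (exp_op sc ?C) n v
      + ser_mult (exp_op sc A) (dlt (\<lambda>v. 0) (exp_op sc ?C)) n v"
    by (rule leibniz[OF lin_0 LA])
  also have "\<dots> = A (?G n v) + ?G n (?C v)"
    by (simp add: dlt0_expA[OF A] dlt0_expC[OF C] ser_mult_def lin_sum[OF A] del: exp_op_def)
  finally have "dlt (\<lambda>v. 0) ?G n v = A (?G n v) + ?G n (?C v)" .
  moreover have "dlt (\<lambda>v. 0) ?G n v = sc (of_nat (Suc n)) (?G (Suc n) v)"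
    by (simp add: dlt_def lin_zero[OF lin_ser_mult[OF LA LC]] del: of_nat_Suc)
  ultimately show ?thesis by (simp add: lin_neg[OF LG] del: of_nat_Suc)
qed

lemma uniq:
  assumes X: "\<And>n v. sc (of_nat (Suc n)) (X (Suc n) v) = A (X n v) - X n (B v)"
    and Y: "\<And>n v. sc (of_nat (Suc n)) (Z (Suc n) v) = A (Z n v) - Z n (B v)"
    and X0: "\<And>v. X 0 v = Z 0 v"
  shows "X n = Z n"
proof (induction n)
  case 0 then show ?case using X0 by auto
next
  case (Suc n)
  have inv: "w = sc (1 / of_nat (Suc n)) (sc (of_nat (Suc n)) w)" for w
    by (simp del: of_nat_Suc)
  show ?case
  proof
    fix v
    show "X (Suc n) v = Z (Suc n) v"
      by (subst inv, subst (2) inv, simp only: X Y Suc.IH)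
  qed
qed

theorem abstract_main:
  assumes B: "lin B" and K: "lin K" and S: "\<And>i. lin (S i)" and S0: "\<And>v. S 0 v = 0"
    and dS: "\<And>n v. dlt B S n v = (if n = 0 then K v else 0)"
    and comm: "\<And>i v. K (S i v) = S i (K v)"
    and AK: "\<And>v. A v = B v + K v"
  shows "ser_mult (exp_op sc A) (exp_op sc (\<lambda>v. - B v)) = ser_exp sc S"
proof
  fix n
  have A: "lin A"
  proof -
    have "A = (\<lambda>v. B v + K v)" using AK by auto
    then show ?thesis using lin_plus[OF B K] by simp
  qed
  show "ser_mult (exp_op sc A) (exp_op sc (\<lambda>v. - B v)) n = ser_exp sc S n"
  proof (rule uniq[where A = A and B = B])
    fix n v
    show "sc (of_nat (Suc n)) (ser_mult (exp_op sc A) (exp_op sc (\<lambda>v. - B v)) (Suc n) v)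
      = A (ser_mult (exp_op sc A) (exp_op sc (\<lambda>v. - B v)) n v)
      - ser_mult (exp_op sc A) (exp_op sc (\<lambda>v. - B v)) n (B v)" by (rule G_rec[OF A B])
  next
    fix n v
    have "dlt B (ser_exp sc S) n v = K (ser_exp sc S n v)" by (rule dlt_exp[OF B K S S0 dS comm])
    then have h: "sc (of_nat (Suc n)) (ser_exp sc S (Suc n) v) - B (ser_exp sc S n v)
        + ser_exp sc S n (B v) = K (ser_exp sc S n v)" by (simp add: dlt_def del: of_nat_Suc)
    have "sc (of_nat (Suc n)) (ser_exp sc S (Suc n) v) = (sc (of_nat (Suc n)) (ser_exp sc S (Suc n) v) - B (ser_exp sc S n v)
        + ser_exp sc S n (B v)) + B (ser_exp sc S n v) - ser_exp sc S n (B v)"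
      by (simp add: algebra_simps del: of_nat_Suc)
    also have "\<dots> = A (ser_exp sc S n v) - ser_exp sc S n (B v)"
      unfolding h AK by (simp add: algebra_simps)
    finally show "sc (of_nat (Suc n)) (ser_exp sc S (Suc n) v) = A (ser_exp sc S n v) - ser_exp sc S n (B v)" .
  next
    fix v
    show "ser_mult (exp_op sc A) (exp_op sc (\<lambda>v. - B v)) 0 v = ser_exp sc S 0 v"
      by (simp add: ser_mult_def exp_op_def ser_exp_def ser_pow_def ser_one_def)
  qed
qed

lemma linear_lin: "Vector_Spaces.linear sc sc f \<Longrightarrow> lin f"
  using Vector_Spaces.linear_iff[of sc sc f] by (simp add: lin_def)

end

lemma fsum_eq:
  assumes "finite F" "\<And>j. j \<notin> F \<Longrightarrow> f j = 0"
  shows "fsum f = sum f F"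
  unfolding fsum_def by (rule sum.mono_neutral_left) (use assms in auto)

theorem lemma3p3:
  fixes scale :: "complex \<Rightarrow> 'v::ab_group_add \<Rightarrow> 'v"
    and Y :: "'v vfield" and vac \<omega> h :: 'v and \<gamma> :: rat
  assumes "is_VOA scale Y vac \<omega>"
    and "\<forall>n::int. n \<ge> 0 \<longrightarrow> Vir Y \<omega> n h = (if n = 0 then h else 0)"
    and "\<forall>n::int. n \<ge> 0 \<longrightarrow> Y h n h = (if n = 1 then scale (of_rat \<gamma>) vac else 0)"
  shows "ser_mult (exp_op scale (\<lambda>v. Vir Y \<omega> 1 v - Y h 1 v)) (exp_op scale (\<lambda>v. - Vir Y \<omega> 1 v))
           = ser_exp scale (\<lambda>k v. if k = 0 then 0
                else scale ((-1) ^ k / of_nat k) (Y h (int k) v))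
       \<and> ser_mult (exp_op scale (\<lambda>v. Vir Y \<omega> (-1) v + Y h (-1) v)) (exp_op scale (\<lambda>v. - Vir Y \<omega> (-1) v))
           = ser_exp scale (\<lambda>k v. if k = 0 then 0
                else scale (1 / of_nat k) (Y h (- int k) v))"
proof -
  note V = assms(1)[unfolded is_VOA_def]
  have vs: "vector_space scale" using V by (rule conjunct1)
  note V2 = V[THEN conjunct2]
  note V3 = V2[THEN conjunct2]
  note V4 = V3[THEN conjunct2]
  note V5 = V4[THEN conjunct2]
  note V6 = V5[THEN conjunct2]
  note V7 = V6[THEN conjunct2]
  note V8 = V7[THEN conjunct2]
  note V9 = V8[THEN conjunct2]
  interpret cvs scale by (rule cvs.intro[OF vs])
  have linY0: "\<And>a n. Vector_Spaces.linear scale scale (Y a n)" using V2[THEN conjunct1] by blast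
  have linY: "\<And>a n. lin (Y a n)" by (rule linear_lin[OF linY0])
  have linYa0: "\<And>n b. Vector_Spaces.linear scale scale (\<lambda>a. Y a n b)" using V3[THEN conjunct1] by blast
  have linYa: "\<And>n b. lin (\<lambda>a. Y a n b)" by (rule linear_lin[OF linYa0])
  have Y0: "\<And>n b. Y 0 n b = 0" using lin_zero[OF linYa] by simp
  have Ysc: "\<And>c a n b. Y (scale c a) n b = scale c (Y a n b)" using lin_scale[OF linYa] by simp
  have vac: "\<And>n v. Y vac n v = (if n = -1 then v else 0)" using V5[THEN conjunct1] by blast
  have Lm1: "\<And>a n v. Y (Vir Y \<omega> (-1) a) n v = scale (- of_int n) (Y a (n - 1) v)" using V9[THEN conjunct1] by blast
  have jac: "\<And>a b c m n k. fsum (\<lambda>j. scale (of_int m gchoose j) (Y (Y a (n + int j) b) (m + k - int j) c)) =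
        fsum (\<lambda>j. scale ((-1) ^ j * (of_int n gchoose j))
                 (Y a (m + n - int j) (Y b (k + int j) c)
                  - scale ((-1) powi n) (Y b (n + k - int j) (Y a (m + int j) c))))"
    using V7[THEN conjunct1] by blast
  have comm0: "fsum (\<lambda>j. scale (of_int m gchoose j) (Y (Y a (int j) b) (m + k - int j) c))
      = Y a m (Y b k c) - Y b k (Y a m c)" for a b c m k
  proof -
    have "fsum (\<lambda>j. scale ((-1) ^ j * (of_int 0 gchoose j))
                 (Y a (m + 0 - int j) (Y b (k + int j) c)
                  - scale ((-1) powi 0) (Y b (0 + k - int j) (Y a (m + int j) c))))
        = Y a m (Y b k c) - Y b k (Y a m c)"
      by (subst fsum_eq[where F = "{0}"]) (auto simp: gbinomial_0_left)
    then show ?thesis using jac[of m a 0 b k c] by simp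
  qed
  have hh: "Y h m (Y h k c) = Y h k (Y h m c)" if "m + k \<noteq> 0" for m k c
  proof -
    have "fsum (\<lambda>j. scale (of_int m gchoose j) (Y (Y h (int j) h) (m + k - int j) c)) = 0"
    proof (subst fsum_eq[where F = "{}"])
      fix j
      show "scale (of_int m gchoose j) (Y (Y h (int j) h) (m + k - int j) c) = 0"
        using assms(3) that by (simp add: Ysc vac Y0)
    qed simp_all
    then show ?thesis using comm0[of m h h k c] by simp
  qed
  have V1: "Vir Y \<omega> 1 (Y h k c) - Y h k (Vir Y \<omega> 1 c) = scale (- of_int k) (Y h (k + 1) c)" for k c
  proof -
    have vir: "Y \<omega> n = Vir Y \<omega> (n - 1)" for n by (simp add: Vir_def)
    have "fsum (\<lambda>j. scale (of_int 2 gchoose j) (Y (Y \<omega> (int j) h) (2 + k - int j) c))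
        = (\<Sum>j\<in>{0,1}. scale (of_int 2 gchoose j) (Y (Y \<omega> (int j) h) (2 + k - int j) c))"
    proof (rule fsum_eq)
      fix j :: nat assume "j \<notin> {0, 1}"
      then have "Vir Y \<omega> (int j - 1) h = 0" using assms(2) by auto
      then show "scale (of_int 2 gchoose j) (Y (Y \<omega> (int j) h) (2 + k - int j) c) = 0"
        by (simp add: vir Y0)
    qed simp
    also have "\<dots> = scale (- (2 + of_int k)) (Y h (k + 1) c) + scale 2 (Y h (k + 1) c)"
      using assms(2) by (simp add: vir Lm1 add.commute)
    also have "\<dots> = scale (- of_int k) (Y h (k + 1) c)"
      by (simp add: scale_left_distrib[symmetric])
    finally show ?thesis using comm0[of 2 \<omega> h k c] by (simp add: Vir_def)
  qed
  have V2: "Vir Y \<omega> (-1) (Y h k c) - Y h k (Vir Y \<omega> (-1) c) = scale (- of_int k) (Y h (k - 1) c)" for k c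
  proof -
    have vir: "Y \<omega> n = Vir Y \<omega> (n - 1)" for n by (simp add: Vir_def)
    have "fsum (\<lambda>j. scale (of_int 0 gchoose j) (Y (Y \<omega> (int j) h) (0 + k - int j) c))
        = (\<Sum>j\<in>{0}. scale (of_int 0 gchoose j) (Y (Y \<omega> (int j) h) (0 + k - int j) c))"
      by (rule fsum_eq) (auto simp: gbinomial_0_left)
    also have "\<dots> = scale (- of_int k) (Y h (k - 1) c)"
      by (simp add: vir Lm1)
    finally show ?thesis using comm0[of 0 \<omega> h k c] by (simp add: Vir_def)
  qed
  have linV: "\<And>n. lin (Vir Y \<omega> n)" by (simp add: Vir_def linY)
  define S1 where "S1 = (\<lambda>k v. if k = 0 then 0
                else scale ((-1) ^ k / of_nat k) (Y h (int k) v))"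
  define S2 where "S2 = (\<lambda>k v. if k = 0 then 0
                else scale (1 / of_nat k) (Y h (- int k) v))"
  have r1: "ser_mult (exp_op scale (\<lambda>v. Vir Y \<omega> 1 v - Y h 1 v)) (exp_op scale (\<lambda>v. - Vir Y \<omega> 1 v))
           = ser_exp scale S1"
  proof (rule abstract_main[where K = "\<lambda>v. - Y h 1 v"])
    show "lin (Vir Y \<omega> 1)" by (rule linV)
    show "lin (\<lambda>v. - Y h 1 v)" by (rule lin_uminus[OF linY])
    show "lin (S1 i)" for i
      by (cases "i = 0") (simp_all add: S1_def lin_0 lin_sc[OF linY])
    show "S1 0 v = 0" for v by (simp add: S1_def)
    show "- Y h 1 (S1 i v) = S1 i (- Y h 1 v)" for i v
      by (cases "i = 0") (simp_all add: S1_def lin_zero[OF linY] lin_scale[OF linY] lin_neg[OF linY] hh)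
    show "Vir Y \<omega> 1 v - Y h 1 v = Vir Y \<omega> 1 v + - Y h 1 v" for v by simp
    show "dlt (Vir Y \<omega> 1) S1 n v = (if n = 0 then - Y h 1 v else 0)" for n v
    proof (cases "n = 0")
      case True then show ?thesis by (simp add: dlt_def S1_def lin_zero[OF linV])
    next
      case False
      have "Vir Y \<omega> 1 (S1 n v) - S1 n (Vir Y \<omega> 1 v)
          = scale ((-1) ^ n / of_nat n) (Vir Y \<omega> 1 (Y h (int n) v) - Y h (int n) (Vir Y \<omega> 1 v))"
        using False by (simp add: S1_def lin_scale[OF linV] scale_right_diff_distrib)
      also have "\<dots> = scale ((-1) ^ n / of_nat n * (- of_nat n)) (Y h (int n + 1) v)"
        by (simp add: V1)
      also have "\<dots> = scale (- ((-1) ^ n)) (Y h (int n + 1) v)"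
        using False by simp
      finally have a: "Vir Y \<omega> 1 (S1 n v) - S1 n (Vir Y \<omega> 1 v) = scale (- ((-1) ^ n)) (Y h (int n + 1) v)" .
      have b: "scale (of_nat (Suc n)) (S1 (Suc n) v) = scale ((-1) ^ Suc n) (Y h (int n + 1) v)"
      proof -
        have "of_nat (Suc n) * ((-1) ^ Suc n / of_nat (Suc n)) = ((-1) ^ Suc n :: complex)"
          by (simp del: of_nat_Suc)
        moreover have "int (Suc n) = int n + 1" by simp
        ultimately show ?thesis by (simp only: S1_def scale_scale) simp
      qed
      have "dlt (Vir Y \<omega> 1) S1 n v = scale (of_nat (Suc n)) (S1 (Suc n) v)
          - (Vir Y \<omega> 1 (S1 n v) - S1 n (Vir Y \<omega> 1 v))"
        by (simp add: dlt_def algebra_simps del: of_nat_Suc)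
      also have "\<dots> = 0" unfolding a b by (simp add: scale_minus_left[symmetric] del: scale_minus_left)
      finally show ?thesis using False by simp
    qed
  qed
  have r2: "ser_mult (exp_op scale (\<lambda>v. Vir Y \<omega> (-1) v + Y h (-1) v)) (exp_op scale (\<lambda>v. - Vir Y \<omega> (-1) v))
           = ser_exp scale S2"
  proof (rule abstract_main[where K = "Y h (-1)"])
    show "lin (Vir Y \<omega> (-1))" by (rule linV)
    show "lin (Y h (-1))" by (rule linY)
    show "lin (S2 i)" for i
      by (cases "i = 0") (simp_all add: S2_def lin_0 lin_sc[OF linY])
    show "S2 0 v = 0" for v by (simp add: S2_def)
    show "Y h (-1) (S2 i v) = S2 i (Y h (-1) v)" for i v
      by (cases "i = 0") (simp_all add: S2_def lin_zero[OF linY] lin_scale[OF linY] hh)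
    show "Vir Y \<omega> (-1) v + Y h (-1) v = Vir Y \<omega> (-1) v + Y h (-1) v" for v by simp
    show "dlt (Vir Y \<omega> (-1)) S2 n v = (if n = 0 then Y h (-1) v else 0)" for n v
    proof (cases "n = 0")
      case True then show ?thesis by (simp add: dlt_def S2_def lin_zero[OF linV])
    next
      case False
      have "Vir Y \<omega> (-1) (S2 n v) - S2 n (Vir Y \<omega> (-1) v)
          = scale (1 / of_nat n) (Vir Y \<omega> (-1) (Y h (- int n) v) - Y h (- int n) (Vir Y \<omega> (-1) v))"
        using False by (simp add: S2_def lin_scale[OF linV] scale_right_diff_distrib)
      also have "\<dots> = scale (1 / of_nat n * of_nat n) (Y h (- int n - 1) v)"
        by (simp add: V2)
      also have "\<dots> = Y h (- int n - 1) v"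
        using False by simp
      finally have a: "Vir Y \<omega> (-1) (S2 n v) - S2 n (Vir Y \<omega> (-1) v) = Y h (- int n - 1) v" .
      have b: "scale (of_nat (Suc n)) (S2 (Suc n) v) = Y h (- int n - 1) v"
      proof -
        have "of_nat (Suc n) * (1 / of_nat (Suc n)) = (1 :: complex)"
          by (simp del: of_nat_Suc)
        moreover have "- int (Suc n) = - int n - 1" by simp
        ultimately show ?thesis by (simp only: S2_def scale_scale) simp
      qed
      have "dlt (Vir Y \<omega> (-1)) S2 n v = scale (of_nat (Suc n)) (S2 (Suc n) v)
          - (Vir Y \<omega> (-1) (S2 n v) - S2 n (Vir Y \<omega> (-1) v))"
        by (simp add: dlt_def algebra_simps del: of_nat_Suc)
      also have "\<dots> = 0" unfolding a b by simp
      finally show ?thesis using False by simp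
    qed
  qed
  show ?thesis using r1 r2 by (simp add: S1_def S2_def)
qed

end
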